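(* Let $n\ge 2$, let $k_1,\dots,k_n$ be positive integers with $\sum_{i=1}^n\frac1{k_i}=1$, $k=\operatorname{lcm}(k_1,\dots,k_n)$, $w_i=k/k_i$, and $P(x_1,\dots,x_{n-1})=\sum_{i=1}^{n-1}x_i^{k_i}+1$. Fix $\epsilon_1,\dots,\epsilon_{n-1}>0$ and let $C_\epsilon=\{|x_1|=\epsilon_1,\dots,|x_{n-1}|=\epsilon_{n-1}\}$. Let $\psi\in\mathbb{C}$ with $\xi=\psi^{-1}$ satisfying $|\xi|\cdot\sup_{C_\epsilon}\big|\frac{P}{k x_1\cdots x_{n-1}}\big|<1$, and set $$\tilde M=\exp\Big(-\frac{1}{(2\pi i)^{n-1}}\oint_{C_\epsilon}\Big[\log\psi+\log\Big(1-\xi\frac{P(x_1,\dots,x_{n-1})}{k x_1\cdots x_{n-1}}\Big)\Big]\frac{dx_1}{x_1}\cdots\frac{dx_{n-1}}{x_{n-1}}\Big),$$ with the principal branch for the second logarithm. Then $$\tilde M=\xi\exp\Big(\sum_{m\ge1}c_m\frac{\xi^m}{mk^m}\Big),\qquad c_m=\begin{cases}\dfrac{m!}{\prod_{i=1}^n (m/k_i)!},& k\mid m,\\[2mm] 0,&\text{otherwise},\end{cases}$$ where $c_m$ is the coefficient of $x_1^m\cdots x_{n-1}^m$ in $P^m$. Consequently, with $z=\xi^k/k^k$, one has $\tilde M^k/k^k=z\exp\big(\sum_{m\ge1}\frac{(km)!}{\prod_{i=1}^n(w_im)!}\frac{z^m}{m}\big)$, which is independent of $\epsilon_1,\dots,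\epsilon_{n-1}$.
   Context: The value of $\exp(-\log\psi)=\psi^{-1}$ does not depend on the branch chosen for $\log\psi$. *)

theory Defs
  imports "HOL-Analysis.Analysis"
begin

text \<open>The contour integral over the torus
  C_eps = {|x_j| = eps_j, j < N}, i.e. the iterated integral of
  f(x) dx_0 ... dx_{N-1}, computed via the standard counterclockwise
  parametrisation x_j = eps_j e^{i theta_j}, theta_j in [0, 2 pi].\<close>
definition torus_contour_integral ::
  "nat \<Rightarrow> (nat \<Rightarrow> real) \<Rightarrow> ((nat \<Rightarrow> complex) \<Rightarrow> complex) \<Rightarrow> complex" where
  "torus_contour_integral N eps f =
     integral\<^sup>L (PiM {..<N} (\<lambda>_. restrict_space lborel {0..2*pi}))
       (\<lambda>\<theta>. f (\<lambda>j. if j < N then complex_of_real (eps j) * exp (\<i> * complex_of_real (\<theta> j)) else 0)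
             * (\<Prod>j<N. \<i> * complex_of_real (eps j) * exp (\<i> * complex_of_real (\<theta> j))))"

definition torus :: "nat \<Rightarrow> (nat \<Rightarrow> real) \<Rightarrow> (nat \<Rightarrow> complex) set" where
  "torus N eps = {x. (\<forall>j<N. cmod (x j) = eps j) \<and> (\<forall>j\<ge>N. x j = 0)}"

definition fermatP :: "nat \<Rightarrow> (nat \<Rightarrow> nat) \<Rightarrow> (nat \<Rightarrow> complex) \<Rightarrow> complex" where
  "fermatP n k x = (\<Sum>i<n-1. x i ^ k i) + 1"

definition lcmk :: "nat \<Rightarrow> (nat \<Rightarrow> nat) \<Rightarrow> nat" where
  "lcmk n k = Lcm (k ` {..<n})"

definition coeff_c :: "nat \<Rightarrow> (nat \<Rightarrow> nat) \<Rightarrow> nat \<Rightarrow> real" where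
  "coeff_c n k m = (if lcmk n k dvd m
      then fact m / (\<Prod>i<n. fact (m div k i)) else 0)"

end

theory Submission
  imports Defs "HOL-Combinatorics.Multiset_Permutations"
begin

definition cnt :: "nat \<Rightarrow> (nat \<Rightarrow> nat) \<Rightarrow> nat \<Rightarrow> nat" where
  "cnt m w i = card {t\<in>{..<m}. w t = i}"

lemma count_map_upt: "count (mset (map w [0..<m])) i = cnt m w i"
proof -
  have "count (mset (map w [0..<m])) i = length (filter ((=) i) (map w [0..<m]))"
    by (simp only: count_mset count_list_eq_length_filter)
  also have "\<dots> = card {t. t < m \<and> i = w t}"
    unfolding length_filter_conv_card by (intro arg_cong[where f=card]) auto
  also have "{t. t < m \<and> i = w t} = {t\<in>{..<m}. w t = i}" by auto
  finally show ?thesis unfolding cnt_def .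
qed

lemma cnt_sum:
  assumes "w \<in> PiE {..<m} (\<lambda>_. {..<n})"
  shows "(\<Sum>i<n. cnt m w i) = m"
proof -
  have "(\<Sum>i<n. sum (\<lambda>_. 1::nat) {t\<in>{..<m}. w t = i}) = sum (\<lambda>_. 1) {..<m}"
    using assms by (intro sum.group) auto
  then show ?thesis unfolding cnt_def by simp
qed

lemma count_words:
  fixes a :: "nat \<Rightarrow> nat"
  assumes "(\<Sum>i<n. a i) = m"
  shows "card {w \<in> PiE {..<m} (\<lambda>_. {..<n}). \<forall>i<n. cnt m w i = a i}
           = fact m div (\<Prod>i<n. fact (a i))"
    and "(\<Prod>i<n. fact (a i) :: nat) dvd fact m"
proof -
  define A where "A = (\<Sum>i<n. replicate_mset (a i) i)"
  have cA: "count A j = (if j < n then a j else 0)" for j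
    unfolding A_def by (induction n) auto
  have "size (\<Sum>i<n'. replicate_mset (a i) i) = (\<Sum>i<n'. a i)" for n'
    by (induction n') auto
  then have sA: "size A = m" unfolding A_def using assms by simp
  have setA: "set_mset A = {j\<in>{..<n}. a j > 0}"
    using cA by (auto simp: set_mset_def split: if_splits)
  have pr: "(\<Prod>x\<in>set_mset A. fact (count A x)) = (\<Prod>i<n. fact (a i) :: nat)"
  proof -
    have "(\<Prod>x\<in>set_mset A. fact (count A x)) = (\<Prod>x\<in>set_mset A. fact (a x) :: nat)"
      by (rule prod.cong) (auto simp: cA setA)
    also have "\<dots> = (\<Prod>i<n. fact (a i))"
      unfolding setA by (rule prod.mono_neutral_left) auto
    finally show ?thesis .
  qed
  define W where "W = {w \<in> PiE {..<m} (\<lambda>_. {..<n}). \<forall>i<n. cnt m w i = a i}"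
  have bij: "bij_betw (\<lambda>w. map w [0..<m]) W (permutations_of_multiset A)"
  proof (rule bij_betw_byWitness[where f' = "\<lambda>xs t. if t < m then xs ! t else undefined"])
    show "\<forall>w\<in>W. (\<lambda>t. if t < m then map w [0..<m] ! t else undefined) = w"
      by (auto simp: W_def PiE_def extensional_def)
    show "\<forall>xs\<in>permutations_of_multiset A. map (\<lambda>t. if t < m then xs ! t else undefined) [0..<m] = xs"
    proof
      fix xs assume "xs \<in> permutations_of_multiset A"
      then have "mset xs = A" by (simp add: permutations_of_multiset_def)
      then have "length xs = m" using sA by (metis size_mset)
      then show "map (\<lambda>t. if t < m then xs ! t else undefined) [0..<m] = xs"
        by (intro nth_equalityI) auto
    qed
    show "(\<lambda>w. map w [0..<m]) ` W \<subseteq> permutations_of_multiset A"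
    proof
      fix xs assume "xs \<in> (\<lambda>w. map w [0..<m]) ` W"
      then obtain w where w: "w \<in> W" "xs = map w [0..<m]" by auto
      have "mset xs = A"
      proof (rule multiset_eqI)
        fix j
        show "count (mset xs) j = count A j"
        proof (cases "j < n")
          case True
          have "count (mset xs) j = cnt m w j" using w(2) count_map_upt by metis
          then show ?thesis using w(1) True by (simp add: cA W_def)
        next
          case False
          then have "j \<notin> set xs" using w by (auto simp: W_def PiE_def Pi_def)
          then show ?thesis using False by (simp add: cA count_mset_0_iff)
        qed
      qed
      then show "xs \<in> permutations_of_multiset A" by (simp add: permutations_of_multiset_def)
    qed
    show "(\<lambda>xs t. if t < m then xs ! t else undefined) ` permutations_of_multiset A \<subseteq> W"
    proof
      fix w assume "w \<in> (\<lambda>xs t. if t < m then xs ! t else undefined) ` permutations_of_multiset A"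
      then obtain xs where xs: "mset xs = A" "w = (\<lambda>t. if t < m then xs ! t else undefined)"
        by (auto simp: permutations_of_multiset_def)
      have len: "length xs = m" using sA xs(1) by (metis size_mset)
      have mw: "map w [0..<m] = xs" using len xs(2) by (intro nth_equalityI) auto
      have sx: "set xs \<subseteq> {..<n}"
      proof
        fix j assume "j \<in> set xs"
        then have "j \<in> set_mset A" using xs(1) by (metis set_mset_mset)
        then show "j \<in> {..<n}" using setA by auto
      qed
      have wt: "w t < n" if "t < m" for t
      proof -
        have "xs ! t \<in> set xs" using that len by simp
        then show ?thesis using sx xs(2) that by auto
      qed
      have "w \<in> PiE {..<m} (\<lambda>_. {..<n})"
        using wt xs(2) by (auto simp: PiE_def Pi_def extensional_def)
      moreover have "\<forall>i<n. cnt m w i = a i"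
        using mw xs(1) by (metis cA count_map_upt)
      ultimately show "w \<in> W" by (simp add: W_def)
    qed
  qed
  have "card W = card (permutations_of_multiset A)" using bij by (rule bij_betw_same_card)
  then show "card W = fact m div (\<Prod>i<n. fact (a i))"
    using card_permutations_of_multiset(1)[of A] pr sA by simp
  show "(\<Prod>i<n. fact (a i) :: nat) dvd fact m"
    using card_permutations_of_multiset(2)[of A] pr sA by simp
qed

definition RR :: "real measure" where "RR = restrict_space lborel {0..2*pi}"

lemma finR: "finite_measure RR"
  unfolding RR_def by (intro finite_measureI) (simp add: emeasure_restrict_space space_restrict_space)
lemma measR: "measure RR (space RR) = 2*pi"
  unfolding RR_def by (simp add: measure_restrict_space space_restrict_space)
lemma psf: "product_sigma_finite (\<lambda>_::nat. RR)"
  unfolding product_sigma_finite_def using finR finite_measure.axioms(1) by blast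
lemma sets_RR[measurable_cong]: "sets RR = sets (restrict_space borel {0..2*pi})"
  unfolding RR_def by (simp add: sets_restrict_space)

lemma integrable_exp_RR: "integrable RR (\<lambda>t. exp (\<i> * of_int d * of_real t))"
proof (rule finite_measure.integrable_const_bound[OF finR, where B=1])
  show "AE x in RR. norm (exp (\<i> * of_int d * of_real x)) \<le> 1"
    by (simp add: norm_exp_i_times[of "of_int d * x", simplified])
  show "(\<lambda>t. exp (\<i> * of_int d * complex_of_real t)) \<in> borel_measurable RR"
    unfolding RR_def by (intro measurable_restrict_space1) measurable
qed

lemma integral_exp_RR:
  "integral\<^sup>L RR (\<lambda>t. exp (\<i> * of_int d * of_real t)) = (if d = 0 then 2*pi else 0)"
proof (cases "d = 0")
  case True
  then show ?thesis using measR by (simp add: scaleR_conv_of_real)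
next
  case False
  have "integral\<^sup>L RR (\<lambda>t. exp (\<i> * of_int d * of_real t))
        = integral\<^sup>L lborel (\<lambda>t. indicator {0..2*pi} t *\<^sub>R exp (\<i> * of_int d * of_real t))"
    unfolding RR_def by (rule integral_restrict_space) simp
  also have "\<dots> = (LBINT t=ereal 0..ereal (2*pi). exp (\<i> * of_int d * of_real t))"
  proof -
    have "(LBINT t=ereal 0..ereal (2*pi). exp (\<i> * of_int d * of_real t)) = (LBINT t:{0..2*pi}. exp (\<i> * of_int d * of_real t))"
      by (rule interval_integral_Icc) simp
    then show ?thesis by (simp add: set_lebesgue_integral_def)
  qed
  also have "\<dots> = exp (\<i> * of_int d * of_real (2*pi)) / (\<i> * of_int d) - exp (\<i> * of_int d * of_real 0) / (\<i> * of_int d)"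
  proof (rule interval_integral_FTC_finite)
    show "continuous_on {min 0 (2 * pi)..max 0 (2 * pi)} (\<lambda>t. exp (\<i> * of_int d * complex_of_real t))"
      by (intro continuous_intros)
    fix x :: real
    have "((\<lambda>t. exp (\<i> * of_int d * complex_of_real t) / (\<i> * of_int d)) has_vector_derivative
           exp (\<i> * of_int d * complex_of_real x)) (at x)"
    proof -
      have "((\<lambda>z. exp (\<i> * of_int d * z) / (\<i> * of_int d)) has_field_derivative
           exp (\<i> * of_int d * complex_of_real x)) (at (complex_of_real x))"
        using False by (auto intro!: derivative_eq_intros)
      from has_vector_derivative_real_field[OF this] show ?thesis by simp
    qed
    then show "((\<lambda>t. exp (\<i> * of_int d * complex_of_real t) / (\<i> * of_int d)) has_vector_derivative
           exp (\<i> * of_int d * complex_of_real x)) (at x within {min 0 (2 * pi)..max 0 (2 * pi)})"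
      by (rule has_vector_derivative_at_within)
  qed
  also have "exp (\<i> * of_int d * of_real (2*pi)) = 1"
    using exp_integer_2pi[of "of_int d"] by (simp add: mult_ac)
  finally show ?thesis using False by simp
qed

definition MM :: "nat \<Rightarrow> (nat \<Rightarrow> real) measure" where
  "MM N = PiM {..<N} (\<lambda>_. RR)"

lemma integrable_prod_exp:
  "integrable (MM N) (\<lambda>\<theta>. \<Prod>i<N. a i * exp (\<i> * of_int (d i) * of_real (\<theta> i)))"
  unfolding MM_def
  by (rule product_sigma_finite.product_integrable_prod[OF psf, of "{..<N}"
        "\<lambda>i t. a i * exp (\<i> * of_int (d i) * of_real t)", simplified])
     (auto intro: integrable_exp_RR)

lemma integral_prod_exp:
  "integral\<^sup>L (MM N) (\<lambda>\<theta>. \<Prod>i<N. a i * exp (\<i> * of_int (d i) * of_real (\<theta> i)))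
     = (\<Prod>i<N. a i * (if d i = 0 then 2*pi else 0))"
  unfolding MM_def
  by (subst product_sigma_finite.product_integral_prod[OF psf, of "{..<N}"
        "\<lambda>i t. a i * exp (\<i> * of_int (d i) * of_real t)", simplified])
     (auto intro: integrable_exp_RR simp: integral_exp_RR)

lemma integrable_MM_one: "integrable (MM N) (\<lambda>_. 1::complex)"
  using integrable_prod_exp[of N "\<lambda>_. 1" "\<lambda>_. 0"] by simp

lemma integral_MM_one: "integral\<^sup>L (MM N) (\<lambda>_. 1::complex) = (2*pi)^N"
  using integral_prod_exp[of N "\<lambda>_. 1" "\<lambda>_. 0"] by simp

lemma finMM: "finite_measure (MM N)"
proof -
  have "integrable (MM N) (\<lambda>x. norm (1::complex))"
    using integrable_norm[OF integrable_MM_one[of N]] .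
  then have "integrable (MM N) (indicator (space (MM N)) :: _ \<Rightarrow> real)"
  proof -
    have "integrable (MM N) (indicator (space (MM N)) :: _ \<Rightarrow> real) \<longleftrightarrow> integrable (MM N) (\<lambda>x. norm (1::complex))"
      by (rule Bochner_Integration.integrable_cong) auto
    then show ?thesis using \<open>integrable (MM N) (\<lambda>x. norm (1::complex))\<close> by blast
  qed
  then have "emeasure (MM N) (space (MM N)) < \<infinity>"
    by (simp add: integrable_indicator_iff)
  then show ?thesis by (intro finite_measureI) simp
qed

lemma measMM: "measure (MM N) (space (MM N)) = (2*pi)^N"
proof -
  have "complex_of_real (measure (MM N) (space (MM N))) = complex_of_real ((2*pi)^N)"
    using integral_MM_one[of N] by (simp add: scaleR_conv_of_real)
  then show ?thesis by (simp only: of_real_eq_iff)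
qed

definition xp :: "(nat \<Rightarrow> real) \<Rightarrow> nat \<Rightarrow> (nat \<Rightarrow> real) \<Rightarrow> nat \<Rightarrow> complex" where
  "xp eps N \<theta> = (\<lambda>j. if j < N then of_real (eps j) * exp (\<i> * of_real (\<theta> j)) else 0)"

definition gg :: "nat \<Rightarrow> (nat \<Rightarrow> real) \<Rightarrow> (nat \<Rightarrow> nat) \<Rightarrow> nat \<Rightarrow> (nat \<Rightarrow> real) \<Rightarrow> complex" where
  "gg N eps k K \<theta> = fermatP (Suc N) k (xp eps N \<theta>) / (of_nat K * (\<Prod>j<N. xp eps N \<theta> j))"

lemma pow_ratio:
  assumes "e > 0"
  shows "(of_real e * exp (\<i> * of_real t)) ^ a / (of_real e * exp (\<i> * of_real t)) ^ m
         = of_real (e ^ a / e ^ m) * exp (\<i> * of_int (int a - int m) * of_real t)"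
proof -
  have "(of_real e * exp (\<i> * of_real t)) ^ a = of_real (e ^ a) * exp (of_nat a * (\<i> * of_real t))"
    by (simp add: power_mult_distrib exp_of_nat_mult)
  moreover have "(of_real e * exp (\<i> * of_real t)) ^ m = of_real (e ^ m) * exp (of_nat m * (\<i> * of_real t))"
    by (simp add: power_mult_distrib exp_of_nat_mult)
  moreover have "exp (of_nat a * (\<i> * of_real t)) / exp (of_nat m * (\<i> * of_real t))
        = exp (\<i> * of_int (int a - int m) * of_real t)"
    by (simp add: exp_diff[symmetric] algebra_simps)
  ultimately show ?thesis using assms
    by (simp add: field_simps)
qed

lemma prod_group_pow:
  assumes "w \<in> PiE {..<m} (\<lambda>_. {..<n})"
  shows "(\<Prod>t<m. y (w t)) = (\<Prod>i<n. (y i :: complex) ^ cnt m w i)"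
proof -
  have "(\<Prod>i<n. prod (\<lambda>t. y (w t)) {t\<in>{..<m}. w t = i}) = (\<Prod>t<m. y (w t))"
    using assms by (intro prod.group) auto
  moreover have "prod (\<lambda>t. y (w t)) {t\<in>{..<m}. w t = i} = y i ^ cnt m w i" for i
  proof -
    have "prod (\<lambda>t. y (w t)) {t\<in>{..<m}. w t = i} = prod (\<lambda>t. y i) {t\<in>{..<m}. w t = i}"
      by (rule prod.cong) auto
    then show ?thesis by (simp add: cnt_def)
  qed
  ultimately show ?thesis by simp
qed

lemma gg_pow_expand:
  assumes eps: "\<forall>j<N. eps j > 0" and K: "K > 0"
  shows "gg N eps k K \<theta> ^ m = (\<Sum>w\<in>PiE {..<m} (\<lambda>_. {..<Suc N}).
           (1 / of_nat K ^ m) * (\<Prod>i<N. of_real (eps i ^ (k i * cnt m w i) / eps i ^ m)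
              * exp (\<i> * of_int (int (k i * cnt m w i) - int m) * of_real (\<theta> i))))"
proof -
  define x where "x = xp eps N \<theta>"
  define y where "y i = (if i < N then x i ^ k i else 1)" for i
  have xnz: "x j \<noteq> 0" if "j < N" for j
    using eps[rule_format, OF that] that by (simp add: x_def xp_def)
  have P: "fermatP (Suc N) k x = (\<Sum>i<Suc N. y i)"
    by (simp add: fermatP_def y_def)
  have "(\<Sum>i<Suc N. y i) ^ m = (\<Prod>t<m. \<Sum>i<Suc N. y i)" by simp
  also have "\<dots> = (\<Sum>w\<in>PiE {..<m} (\<lambda>_. {..<Suc N}). \<Prod>t<m. y (w t))"
    by (rule prod_sum_PiE) auto
  also have "\<dots> = (\<Sum>w\<in>PiE {..<m} (\<lambda>_. {..<Suc N}). \<Prod>i<N. x i ^ (k i * cnt m w i))"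
  proof (rule sum.cong[OF refl])
    fix w assume w: "w \<in> PiE {..<m} (\<lambda>_. {..<Suc N})"
    have "(\<Prod>t<m. y (w t)) = (\<Prod>i<Suc N. y i ^ cnt m w i)" by (rule prod_group_pow[OF w])
    also have "\<dots> = (\<Prod>i<N. y i ^ cnt m w i)" by (simp add: y_def)
    also have "\<dots> = (\<Prod>i<N. x i ^ (k i * cnt m w i))"
      by (rule prod.cong) (auto simp: y_def power_mult)
    finally show "(\<Prod>t<m. y (w t)) = (\<Prod>i<N. x i ^ (k i * cnt m w i))" .
  qed
  finally have num: "fermatP (Suc N) k x ^ m = (\<Sum>w\<in>PiE {..<m} (\<lambda>_. {..<Suc N}). \<Prod>i<N. x i ^ (k i * cnt m w i))"
    using P by simp
  have den: "(of_nat K * (\<Prod>j<N. x j)) ^ m = of_nat K ^ m * (\<Prod>j<N. x j ^ m)"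
    by (simp add: power_mult_distrib prod_power_distrib)
  have "gg N eps k K \<theta> ^ m = fermatP (Suc N) k x ^ m / (of_nat K ^ m * (\<Prod>j<N. x j ^ m))"
    unfolding gg_def x_def[symmetric] by (simp add: power_divide den)
  also have "\<dots> = (\<Sum>w\<in>PiE {..<m} (\<lambda>_. {..<Suc N}). (1 / of_nat K ^ m) * (\<Prod>i<N. x i ^ (k i * cnt m w i) / x i ^ m))"
    unfolding num sum_divide_distrib
    by (rule sum.cong[OF refl]) (simp add: prod_dividef)
  also have "\<dots> = (\<Sum>w\<in>PiE {..<m} (\<lambda>_. {..<Suc N}).
           (1 / of_nat K ^ m) * (\<Prod>i<N. of_real (eps i ^ (k i * cnt m w i) / eps i ^ m)
              * exp (\<i> * of_int (int (k i * cnt m w i) - int m) * of_real (\<theta> i))))"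
  proof (intro sum.cong refl arg_cong2[where f="(*)"] prod.cong)
    fix w i assume "i \<in> {..<N}"
    then show "x i ^ (k i * cnt m w i) / x i ^ m = of_real (eps i ^ (k i * cnt m w i) / eps i ^ m)
              * exp (\<i> * of_int (int (k i * cnt m w i) - int m) * of_real (\<theta> i))"
      using eps by (simp add: x_def xp_def pow_ratio)
  qed
  finally show ?thesis .
qed

lemma prod_factor:
  assumes eps: "\<forall>j<N. eps j > 0"
  shows "(\<Prod>i<N. of_real (eps i ^ (k i * cnt m w i) / eps i ^ m) *
            complex_of_real (if int (k i * cnt m w i) - int m = 0 then 2 * pi else 0))
         = (if \<forall>i<N. k i * cnt m w i = m then (2 * complex_of_real pi) ^ N else 0)"
proof (cases "\<forall>i<N. k i * cnt m w i = m")
  case True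
  have "(\<Prod>i<N. of_real (eps i ^ (k i * cnt m w i) / eps i ^ m) *
            complex_of_real (if int (k i * cnt m w i) - int m = 0 then 2 * pi else 0))
         = (\<Prod>i<N. 2 * complex_of_real pi)"
    using eps True by (intro prod.cong) auto
  then show ?thesis using True by simp
next
  case False
  then obtain i where i: "i < N" "k i * cnt m w i \<noteq> m" by auto
  have d: "int (k i * cnt m w i) - int m \<noteq> 0" using i(2) by (metis eq_iff_diff_eq_0 of_nat_eq_iff)
  have fz: "of_real (eps i ^ (k i * cnt m w i) / eps i ^ m) *
            complex_of_real (if int (k i * cnt m w i) - int m = 0 then 2 * pi else 0) = 0"
    by (simp only: d if_False of_real_0 mult_zero_right)
  have pz: "(\<Prod>i<N. of_real (eps i ^ (k i * cnt m w i) / eps i ^ m) *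
            complex_of_real (if int (k i * cnt m w i) - int m = 0 then 2 * pi else 0)) = 0"
    by (rule prod_zero[OF finite_lessThan]) (use i(1) fz in blast)
  show ?thesis by (simp only: pz False if_False)
qed

lemma gg_pow_integral:
  assumes eps: "\<forall>j<N. eps j > 0" and K: "K > 0"
  shows "integrable (MM N) (\<lambda>\<theta>. gg N eps k K \<theta> ^ m)"
    and "integral\<^sup>L (MM N) (\<lambda>\<theta>. gg N eps k K \<theta> ^ m)
       = of_real ((2*pi)^N / real K ^ m *
           real (card {w\<in>PiE {..<m} (\<lambda>_. {..<Suc N}). \<forall>i<N. k i * cnt m w i = m}))"
proof -
  define A where "A = PiE {..<m} (\<lambda>_. {..<Suc N})"
  define T where "T w = (\<lambda>\<theta>. (1 / of_nat K ^ m) * (\<Prod>i<N. of_real (eps i ^ (k i * cnt m w i) / eps i ^ m)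
              * exp (\<i> * of_int (int (k i * cnt m w i) - int m) * of_real (\<theta> i))))" for w
  have eq: "gg N eps k K \<theta> ^ m = (\<Sum>w\<in>A. T w \<theta>)" for \<theta>
    unfolding A_def T_def by (simp only: gg_pow_expand[OF eps K])
  have intT: "integrable (MM N) (T w)" for w
    unfolding T_def by (intro integrable_mult_right integrable_prod_exp)
  have IT: "integral\<^sup>L (MM N) (T w) = (1 / of_nat K ^ m) *
      (if \<forall>i<N. k i * cnt m w i = m then (2 * complex_of_real pi) ^ N else 0)" for w
    by (simp only: T_def integral_mult_right_zero integral_prod_exp prod_factor[OF eps])
  show "integrable (MM N) (\<lambda>\<theta>. gg N eps k K \<theta> ^ m)"
    unfolding eq using intT by (intro Bochner_Integration.integrable_sum) auto
  have "integral\<^sup>L (MM N) (\<lambda>\<theta>. gg N eps k K \<theta> ^ m) = (\<Sum>w\<in>A. integral\<^sup>L (MM N) (T w))"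
    unfolding eq using intT by (intro Bochner_Integration.integral_sum) auto
  also have "\<dots> = (\<Sum>w\<in>A. if \<forall>i<N. k i * cnt m w i = m then (1 / of_nat K ^ m) * (2 * complex_of_real pi) ^ N else 0)"
    unfolding IT by (rule sum.cong) auto
  also have "\<dots> = (\<Sum>w\<in>{w\<in>A. \<forall>i<N. k i * cnt m w i = m}. (1 / of_nat K ^ m) * (2 * complex_of_real pi) ^ N)"
    by (rule sum.inter_filter[symmetric]) (simp add: A_def finite_PiE)
  also have "\<dots> = of_real ((2*pi)^N / real K ^ m *
           real (card {w\<in>A. \<forall>i<N. k i * cnt m w i = m}))"
    by simp
  finally show "integral\<^sup>L (MM N) (\<lambda>\<theta>. gg N eps k K \<theta> ^ m)
       = of_real ((2*pi)^N / real K ^ m *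
           real (card {w\<in>PiE {..<m} (\<lambda>_. {..<Suc N}). \<forall>i<N. k i * cnt m w i = m}))"
    unfolding A_def .
qed

lemma card_W:
  assumes kpos: "\<forall>i<Suc N. k i > 0" and ksum: "(\<Sum>i<Suc N. 1 / real (k i)) = 1"
  shows "real (card {w\<in>PiE {..<m} (\<lambda>_. {..<Suc N}). \<forall>i<N. k i * cnt m w i = m}) = coeff_c (Suc N) k m"
proof -
  define A where "A = PiE {..<m} (\<lambda>_. {..<Suc N})"
  have last: "k N * cnt m w N = m" if w: "w \<in> A" and h: "\<forall>i<N. k i * cnt m w i = m" for w
  proof -
    have s: "(\<Sum>i<Suc N. cnt m w i) = m" using w cnt_sum unfolding A_def by blast
    have ci: "real (cnt m w i) = real m / real (k i)" if "i < N" for i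
    proof -
      have "real (k i) * real (cnt m w i) = real m" using h that by (metis of_nat_mult)
      moreover have "real (k i) > 0" using kpos that by simp
      ultimately show ?thesis by (simp add: field_simps)
    qed
    have "real (cnt m w N) = real m - (\<Sum>i<N. real (cnt m w i))"
      using s by (simp flip: of_nat_sum) 
    also have "\<dots> = real m - (\<Sum>i<N. real m / real (k i))"
      using ci by simp
    also have "\<dots> = real m * (1 - (\<Sum>i<N. 1 / real (k i)))"
      by (simp add: sum_distrib_left algebra_simps)
    also have "1 - (\<Sum>i<N. 1 / real (k i)) = 1 / real (k N)"
      using ksum by simp
    finally have "real (cnt m w N) = real m / real (k N)" by simp
    moreover have "real (k N) > 0" using kpos by simp
    ultimately have "real (k N * cnt m w N) = real m" by (simp add: field_simps)
    then show ?thesis by (simp only: of_nat_eq_iff)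
  qed
  have S: "{w\<in>A. \<forall>i<N. k i * cnt m w i = m} = {w\<in>A. \<forall>i<Suc N. k i * cnt m w i = m}"
    using last by (auto simp: less_Suc_eq)
  show ?thesis
  proof (cases "lcmk (Suc N) k dvd m")
    case True
    have kd: "k i dvd m" if "i < Suc N" for i
      using True that unfolding lcmk_def by (meson dvd_Lcm dvd_trans imageI lessThan_iff)
    define a where "a i = m div k i" for i
    have S2: "{w\<in>A. \<forall>i<Suc N. k i * cnt m w i = m} = {w\<in>A. \<forall>i<Suc N. cnt m w i = a i}"
    proof -
      have "k i * c = m \<longleftrightarrow> c = a i" if "i < Suc N" for i c
        using kd[OF that] kpos that unfolding a_def by auto
      then show ?thesis by auto
    qed
    have asum: "(\<Sum>i<Suc N. a i) = m"
    proof -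
      have "real (\<Sum>i<Suc N. a i) = (\<Sum>i<Suc N. real m * (1 / real (k i)))"
        unfolding of_nat_sum a_def
        by (rule sum.cong) (auto simp: real_of_nat_div kd)
      also have "\<dots> = real m * (\<Sum>i<Suc N. 1 / real (k i))" by (simp only: sum_distrib_left)
      also have "\<dots> = real m" using ksum by (simp only: mult_1_right)
      finally show ?thesis by (simp only: of_nat_eq_iff)
    qed
    have "card {w\<in>A. \<forall>i<N. k i * cnt m w i = m} = fact m div (\<Prod>i<Suc N. fact (a i))"
      unfolding S S2 unfolding A_def by (rule count_words(1)[OF asum])
    moreover have "(\<Prod>i<Suc N. fact (a i) :: nat) dvd fact m" by (rule count_words(2)[OF asum])
    ultimately have "real (card {w\<in>A. \<forall>i<N. k i * cnt m w i = m}) = fact m / (\<Prod>i<Suc N. fact (a i))"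
      by (simp add: real_of_nat_div of_nat_prod)
    then show ?thesis using True unfolding coeff_c_def a_def A_def by simp
  next
    case False
    have "{w\<in>A. \<forall>i<Suc N. k i * cnt m w i = m} = {}"
    proof (rule ccontr)
      assume "{w\<in>A. \<forall>i<Suc N. k i * cnt m w i = m} \<noteq> {}"
      then obtain w where "\<forall>i<Suc N. k i * cnt m w i = m" by auto
      then have "\<forall>i<Suc N. k i dvd m" by (metis dvd_triv_left)
      then have "lcmk (Suc N) k dvd m" unfolding lcmk_def by (intro Lcm_least) auto
      then show False using False by simp
    qed
    then have "card {w\<in>A. \<forall>i<N. k i * cnt m w i = m} = 0" unfolding S by (simp only: card.empty)
    then show ?thesis using False unfolding A_def coeff_c_def by simp
  qed
qed

lemma div_le_self_real: "0 \<le> a \<Longrightarrow> 1 \<le> b \<Longrightarrow> a / b \<le> (a::real)"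
  using mult_left_mono[of 1 b a] by (simp add: divide_le_eq)

lemma main_series:
  fixes N :: nat and k :: "nat \<Rightarrow> nat" and eps :: "nat \<Rightarrow> real" and \<xi> :: complex and K :: nat
  assumes kpos: "\<forall>i<Suc N. k i > 0"
    and ksum: "(\<Sum>i<Suc N. 1 / real (k i)) = 1"
    and epspos: "\<forall>j<N. eps j > 0"
    and small: "cmod \<xi> * (SUP x\<in>torus N eps. cmod (fermatP (Suc N) k x / (of_nat K * (\<Prod>j<N. x j)))) < 1"
    and K_def: "K = lcmk (Suc N) k"
  shows "integrable (MM N) (\<lambda>\<theta>. Ln (1 - \<xi> * gg N eps k K \<theta>))"
    and "(\<lambda>m. integral\<^sup>L (MM N) (\<lambda>\<theta>. - (\<xi> ^ Suc m / of_nat (Suc m)) * gg N eps k K \<theta> ^ Suc m))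
           sums integral\<^sup>L (MM N) (\<lambda>\<theta>. Ln (1 - \<xi> * gg N eps k K \<theta>))"
    and "integral\<^sup>L (MM N) (\<lambda>\<theta>. - (\<xi> ^ Suc m / of_nat (Suc m)) * gg N eps k K \<theta> ^ Suc m)
           = - (\<xi> ^ Suc m / of_nat (Suc m)) * of_real ((2*pi)^N / real K ^ Suc m * coeff_c (Suc N) k (Suc m))"
proof -
  have Kpos: "K > 0"
  proof -
    have "Lcm (k ` {..<Suc N}) \<noteq> 0" using kpos by (subst Lcm_0_iff) auto
    then show ?thesis unfolding K_def lcmk_def by (metis gr0I)
  qed
  define Ssup where "Ssup = (SUP x\<in>torus N eps. cmod (fermatP (Suc N) k x / (of_nat K * (\<Prod>j<N. x j))))"
  define r where "r = cmod \<xi> * Ssup"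
  have r1: "r < 1" using small unfolding r_def Ssup_def .
  have peps: "(\<Prod>j<N. eps j) > 0" using epspos by (intro prod_pos) auto
  define B where "B = ((\<Sum>i<N. eps i ^ k i) + 1) / (real K * (\<Prod>j<N. eps j))"
  have bnd: "cmod (fermatP (Suc N) k x / (of_nat K * (\<Prod>j<N. x j))) \<le> B" if x: "x \<in> torus N eps" for x
  proof -
    have xn: "cmod (x j) = eps j" if "j<N" for j using x that by (simp add: torus_def)
    have "cmod (fermatP (Suc N) k x) \<le> cmod (\<Sum>i<N. x i ^ k i) + 1"
      unfolding fermatP_def using norm_triangle_ineq[of "\<Sum>i<N. x i ^ k i" 1] by simp
    also have "cmod (\<Sum>i<N. x i ^ k i) \<le> (\<Sum>i<N. cmod (x i ^ k i))" by (rule norm_sum)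
    also have "(\<Sum>i<N. cmod (x i ^ k i)) = (\<Sum>i<N. eps i ^ k i)"
      by (rule sum.cong) (auto simp: norm_power xn)
    finally have num: "cmod (fermatP (Suc N) k x) \<le> (\<Sum>i<N. eps i ^ k i) + 1" by simp
    have den: "cmod (of_nat K * (\<Prod>j<N. x j)) = real K * (\<Prod>j<N. eps j)"
      by (simp add: norm_mult prod_norm[symmetric] xn)
    have "cmod (fermatP (Suc N) k x / (of_nat K * (\<Prod>j<N. x j))) = cmod (fermatP (Suc N) k x) / (real K * (\<Prod>j<N. eps j))"
      by (simp add: norm_divide den)
    also have "\<dots> \<le> B" unfolding B_def using num Kpos peps
      by (intro divide_right_mono) auto
    finally show ?thesis .
  qed
  have bdd: "bdd_above ((\<lambda>x. cmod (fermatP (Suc N) k x / (of_nat K * (\<Prod>j<N. x j)))) ` torus N eps)"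
    using bnd by (intro bdd_aboveI2) auto
  have xp_torus: "xp eps N \<theta> \<in> torus N eps" for \<theta>
    using epspos by (auto simp: xp_def torus_def norm_mult)
  have gle: "cmod (gg N eps k K \<theta>) \<le> Ssup" for \<theta>
    unfolding Ssup_def gg_def by (rule cSUP_upper[OF xp_torus bdd])
  have wle: "cmod (\<xi> * gg N eps k K \<theta>) \<le> r" for \<theta>
    using gle unfolding r_def norm_mult by (simp add: mult_left_mono)
  have r0: "0 \<le> r" using wle[of "\<lambda>_. 0"] norm_ge_zero order_trans by blast
  define c where "c m = - (\<xi> ^ Suc m / of_nat (Suc m))" for m
  define F where "F m = (\<lambda>\<theta>. c m * gg N eps k K \<theta> ^ Suc m)" for m
  have ser: "(\<lambda>m. F m \<theta>) sums Ln (1 - \<xi> * gg N eps k K \<theta>)" for \<theta>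
  proof -
    define w where "w = \<xi> * gg N eps k K \<theta>"
    have "cmod (- w) < 1" using wle[of \<theta>] r1 unfolding w_def by simp
    from Ln_series'[OF this] have "(\<lambda>n. - (w ^ n) / of_nat n) sums Ln (1 - w)" by simp
    then have "(\<lambda>n. - (w ^ Suc n) / of_nat (Suc n)) sums Ln (1 - w)"
      by (subst sums_Suc_iff) simp
    moreover have "- (w ^ Suc n) / of_nat (Suc n) = F n \<theta>" for n
      unfolding F_def c_def w_def by (simp add: power_mult_distrib)
    ultimately show ?thesis unfolding w_def by simp
  qed
  have intF: "integrable (MM N) (F m)" for m
    unfolding F_def by (intro integrable_mult_right gg_pow_integral(1)[OF epspos Kpos])
  have IF: "integral\<^sup>L (MM N) (F m) = c m * of_real ((2*pi)^N / real K ^ Suc m * coeff_c (Suc N) k (Suc m))" for m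
    unfolding F_def by (simp only: integral_mult_right_zero gg_pow_integral(2)[OF epspos Kpos] card_W[OF kpos ksum])
  have normF: "norm (F m \<theta>) \<le> r ^ Suc m" for m \<theta>
  proof -
    have "norm (F m \<theta>) = cmod (\<xi> * gg N eps k K \<theta>) ^ Suc m / real (Suc m)"
      unfolding F_def c_def norm_mult norm_minus_cancel norm_divide norm_power norm_of_nat
      by (simp add: power_mult_distrib)
    also have "\<dots> \<le> cmod (\<xi> * gg N eps k K \<theta>) ^ Suc m"
      by (rule div_le_self_real) auto
    also have "\<dots> \<le> r ^ Suc m" by (rule power_mono[OF wle]) simp
    finally show ?thesis .
  qed
  have sumgeo: "summable (\<lambda>m. r ^ Suc m)"
    using summable_mult[OF summable_geometric[of r], of r] r0 r1 by simp
  have AEs: "AE \<theta> in MM N. summable (\<lambda>m. norm (F m \<theta>))"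
    by (intro AE_I2 summable_comparison_test'[OF sumgeo]) (use normF in simp_all)
  have intnorm: "integral\<^sup>L (MM N) (\<lambda>\<theta>. norm (F m \<theta>)) \<le> (2*pi)^N * r^Suc m" for m
  proof -
    have "integral\<^sup>L (MM N) (\<lambda>\<theta>. norm (F m \<theta>)) \<le> integral\<^sup>L (MM N) (\<lambda>\<theta>. r^Suc m)"
      by (intro integral_mono integrable_norm intF finite_measure.integrable_const[OF finMM] normF)
    also have "\<dots> = (2*pi)^N * r^Suc m" using measMM by simp
    finally show ?thesis .
  qed
  have sumint: "summable (\<lambda>m. integral\<^sup>L (MM N) (\<lambda>\<theta>. norm (F m \<theta>)))"
  proof (rule summable_comparison_test'[where g="\<lambda>m. (2*pi)^N * r^Suc m", OF summable_mult[OF sumgeo]])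
    fix m :: nat
    show "norm (integral\<^sup>L (MM N) (\<lambda>\<theta>. norm (F m \<theta>))) \<le> (2*pi)^N * r^Suc m"
    proof -
      have "0 \<le> integral\<^sup>L (MM N) (\<lambda>\<theta>. norm (F m \<theta>))"
        by (rule integral_nonneg_AE) simp
      then show ?thesis using intnorm[of m] by simp
    qed
  qed
  have eqsum: "(\<Sum>i. F i \<theta>) = Ln (1 - \<xi> * gg N eps k K \<theta>)" for \<theta>
    using ser[of \<theta>] sums_unique by metis
  show "integrable (MM N) (\<lambda>\<theta>. Ln (1 - \<xi> * gg N eps k K \<theta>))"
    using integrable_suminf[OF intF AEs sumint] eqsum by simp
  have "(\<lambda>i. integral\<^sup>L (MM N) (F i)) sums integral\<^sup>L (MM N) (\<lambda>\<theta>. Ln (1 - \<xi> * gg N eps k K \<theta>))"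
    using sums_integral[OF intF AEs sumint] eqsum by simp
  then show "(\<lambda>m. integral\<^sup>L (MM N) (\<lambda>\<theta>. - (\<xi> ^ Suc m / of_nat (Suc m)) * gg N eps k K \<theta> ^ Suc m))
           sums integral\<^sup>L (MM N) (\<lambda>\<theta>. Ln (1 - \<xi> * gg N eps k K \<theta>))"
    unfolding F_def c_def .
  show "integral\<^sup>L (MM N) (\<lambda>\<theta>. - (\<xi> ^ Suc m / of_nat (Suc m)) * gg N eps k K \<theta> ^ Suc m)
           = - (\<xi> ^ Suc m / of_nat (Suc m)) * of_real ((2*pi)^N / real K ^ Suc m * coeff_c (Suc N) k (Suc m))"
    using IF[of m] unfolding F_def c_def .
qed

lemma torus_integral_eq:
  assumes epspos: "\<forall>j<N. eps j > 0"
  shows "torus_contour_integral N eps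
           (\<lambda>x. (L + Ln (1 - \<xi> * fermatP (Suc N) k x / (of_nat K * (\<Prod>j<N. x j)))) / (\<Prod>j<N. x j))
        = integral\<^sup>L (MM N) (\<lambda>\<theta>. \<i> ^ N * (L + Ln (1 - \<xi> * gg N eps k K \<theta>)))"
proof -
  have M: "PiM {..<N} (\<lambda>_. restrict_space lborel {0..2*pi}) = MM N" by (simp add: MM_def RR_def)
  have pt: "(L + Ln (1 - \<xi> * fermatP (Suc N) k (xp eps N \<theta>) / (of_nat K * (\<Prod>j<N. xp eps N \<theta> j)))) / (\<Prod>j<N. xp eps N \<theta> j)
       * (\<Prod>j<N. \<i> * complex_of_real (eps j) * exp (\<i> * complex_of_real (\<theta> j)))
       = \<i> ^ N * (L + Ln (1 - \<xi> * gg N eps k K \<theta>))" for \<theta>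
  proof -
    define D where "D = (\<Prod>j<N. xp eps N \<theta> j)"
    have D0: "D \<noteq> 0" unfolding D_def using epspos by (auto simp: xp_def)
    have "(\<Prod>j<N. \<i> * complex_of_real (eps j) * exp (\<i> * complex_of_real (\<theta> j))) = (\<Prod>j<N. \<i> * xp eps N \<theta> j)"
      by (rule prod.cong) (auto simp: xp_def)
    also have "\<dots> = \<i> ^ N * D" unfolding D_def by (simp add: prod.distrib)
    finally have P: "(\<Prod>j<N. \<i> * complex_of_real (eps j) * exp (\<i> * complex_of_real (\<theta> j))) = \<i> ^ N * D" .
    have G: "\<xi> * fermatP (Suc N) k (xp eps N \<theta>) / (of_nat K * D) = \<xi> * gg N eps k K \<theta>"
      unfolding gg_def D_def by simp
    show ?thesis unfolding D_def[symmetric] P G using D0 by simp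
  qed
  show ?thesis
    unfolding torus_contour_integral_def M xp_def[symmetric] using pt by simp
qed

lemma alg_aux:
  fixes a C Y Z s :: complex
  assumes "a \<noteq> 0" "s \<noteq> 0" "Z \<noteq> 0"
  shows "a * (C * Y / (a * s * Z)) = C * (Y / Z) / s"
  using assms by (simp add: field_simps)

lemma alg_K:
  fixes K s :: nat and C X :: complex
  assumes "K > 0" "s > 0"
  shows "of_nat K * (C * X ^ (K * s) / (of_nat (K * s) * of_nat K ^ (K * s))) = C * (X ^ K / of_nat K ^ K) ^ s / of_nat s"
proof -
  have "of_nat K * (C * X ^ (K * s) / (of_nat (K * s) * of_nat K ^ (K * s)))
      = of_nat K * (C * (X ^ K) ^ s / (of_nat K * of_nat s * (of_nat K ^ K) ^ s))"
    by (simp only: power_mult of_nat_mult)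
  also have "\<dots> = C * ((X ^ K) ^ s / (of_nat K ^ K) ^ s) / of_nat s"
    using assms by (intro alg_aux) auto
  finally show ?thesis by (simp only: power_divide)
qed

lemma main_aux:
  fixes N :: nat and k :: "nat \<Rightarrow> nat" and eps :: "nat \<Rightarrow> real"
    and \<psi> \<xi> L Mt z :: complex and K :: nat
  assumes kpos: "\<forall>i<Suc N. k i > 0"
    and ksum: "(\<Sum>i<Suc N. 1 / real (k i)) = 1"
    and epspos: "\<forall>j<N. eps j > 0"
    and psi_nz: "\<psi> \<noteq> 0" and xi_def: "\<xi> = inverse \<psi>" and L_log: "exp L = \<psi>"
    and small: "cmod \<xi> * (SUP x\<in>torus N eps. cmod (fermatP (Suc N) k x / (of_nat K * (\<Prod>j<N. x j)))) < 1"
    and K_def: "K = lcmk (Suc N) k"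
    and Mt_def: "Mt = exp (- (1 / (2 * complex_of_real pi * \<i>) ^ N) *
                    torus_contour_integral N eps
                      (\<lambda>x. (L + Ln (1 - \<xi> * fermatP (Suc N) k x / (of_nat K * (\<Prod>j<N. x j))))
                           / (\<Prod>j<N. x j)))"
    and z_def: "z = \<xi> ^ K / of_nat K ^ K"
  shows "(\<exists>S. (\<lambda>m. complex_of_real (coeff_c (Suc N) k (Suc m)) * \<xi> ^ Suc m
                        / (of_nat (Suc m) * of_nat K ^ Suc m)) sums S
                 \<and> Mt = \<xi> * exp S)
          \<and> (\<exists>T. (\<lambda>m. complex_of_real (fact (K * Suc m) / (\<Prod>i<Suc N. fact ((K div k i) * Suc m)))
                        * z ^ Suc m / of_nat (Suc m)) sums T
                 \<and> Mt ^ K / of_nat K ^ K = z * exp T)"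
proof -
  have Kpos: "K > 0"
  proof -
    have "Lcm (k ` {..<Suc N}) \<noteq> 0" using kpos by (subst Lcm_0_iff) auto
    then show ?thesis unfolding K_def lcmk_def by (metis gr0I)
  qed
  note ms = main_series[OF kpos ksum epspos small K_def]
  define J where "J = integral\<^sup>L (MM N) (\<lambda>\<theta>. Ln (1 - \<xi> * gg N eps k K \<theta>))"
  define P where "P = (2 * complex_of_real pi) ^ N"
  have P0: "P \<noteq> 0" unfolding P_def by simp
  have PR: "complex_of_real ((2*pi)^N) = P" unfolding P_def by simp
  have TI: "torus_contour_integral N eps
           (\<lambda>x. (L + Ln (1 - \<xi> * fermatP (Suc N) k x / (of_nat K * (\<Prod>j<N. x j)))) / (\<Prod>j<N. x j))
        = \<i> ^ N * (P * L + J)"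
  proof -
    have "integral\<^sup>L (MM N) (\<lambda>\<theta>. \<i> ^ N * (L + Ln (1 - \<xi> * gg N eps k K \<theta>)))
        = \<i> ^ N * integral\<^sup>L (MM N) (\<lambda>\<theta>. L + Ln (1 - \<xi> * gg N eps k K \<theta>))"
      by (rule integral_mult_right_zero)
    also have "integral\<^sup>L (MM N) (\<lambda>\<theta>. L + Ln (1 - \<xi> * gg N eps k K \<theta>))
        = integral\<^sup>L (MM N) (\<lambda>\<theta>. L) + J"
      unfolding J_def by (rule Bochner_Integration.integral_add[OF finite_measure.integrable_const[OF finMM] ms(1)])
    also have "integral\<^sup>L (MM N) (\<lambda>\<theta>. L) = P * L"
      using measMM[of N] PR by (simp add: scaleR_conv_of_real)
    finally show ?thesis by (simp add: torus_integral_eq[OF epspos])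
  qed
  define S where "S = J * (- 1 / P)"
  have Sser: "(\<lambda>m. complex_of_real (coeff_c (Suc N) k (Suc m)) * \<xi> ^ Suc m
                        / (of_nat (Suc m) * of_nat K ^ Suc m)) sums S"
  proof -
    have "(\<lambda>m. integral\<^sup>L (MM N) (\<lambda>\<theta>. - (\<xi> ^ Suc m / of_nat (Suc m)) * gg N eps k K \<theta> ^ Suc m) * (- 1 / P)) sums S"
      unfolding S_def J_def by (rule sums_mult2[OF ms(2)])
    moreover have "integral\<^sup>L (MM N) (\<lambda>\<theta>. - (\<xi> ^ Suc m / of_nat (Suc m)) * gg N eps k K \<theta> ^ Suc m) * (- 1 / P)
        = complex_of_real (coeff_c (Suc N) k (Suc m)) * \<xi> ^ Suc m / (of_nat (Suc m) * of_nat K ^ Suc m)" for m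
    proof -
      have e: "complex_of_real ((2*pi)^N / real K ^ Suc m * coeff_c (Suc N) k (Suc m))
            = P / of_nat K ^ Suc m * complex_of_real (coeff_c (Suc N) k (Suc m))"
        by (simp flip: PR)
      have "integral\<^sup>L (MM N) (\<lambda>\<theta>. - (\<xi> ^ Suc m / of_nat (Suc m)) * gg N eps k K \<theta> ^ Suc m) * (- 1 / P)
          = - (\<xi> ^ Suc m / of_nat (Suc m)) * (P / of_nat K ^ Suc m * complex_of_real (coeff_c (Suc N) k (Suc m))) * (- 1 / P)"
        by (simp only: ms(3) e)
      then show ?thesis using P0 Kpos by (simp add: field_simps)
    qed
    ultimately show ?thesis by simp
  qed
  have Mt: "Mt = \<xi> * exp S"
  proof -
    have "(1 / (2 * complex_of_real pi * \<i>) ^ N) * (\<i> ^ N * (P * L + J)) = L - S"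
      unfolding S_def P_def using P0 unfolding P_def by (simp add: power_mult_distrib field_simps)
    then have "Mt = exp (- (L - S))" unfolding Mt_def TI by simp
    also have "\<dots> = exp (- L) * exp S" by (simp add: exp_add[symmetric])
    also have "exp (- L) = \<xi>" using L_log xi_def by (simp add: exp_minus)
    finally show ?thesis .
  qed
  define st where "st m = complex_of_real (coeff_c (Suc N) k (Suc m)) * \<xi> ^ Suc m
                        / (of_nat (Suc m) * of_nat K ^ Suc m)" for m
  define tt where "tt m = complex_of_real (fact (K * Suc m) / (\<Prod>i<Suc N. fact ((K div k i) * Suc m)))
                        * z ^ Suc m / of_nat (Suc m)" for m
  have KS: "(\<lambda>m. of_nat K * st m) sums (of_nat K * S)"
    unfolding st_def by (rule sums_mult[OF Sser])
  define g where "g j = K * Suc j - 1" for j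
  have Sg: "Suc (g j) = K * Suc j" for j unfolding g_def using Kpos by simp
  have gsm: "strict_mono g"
  proof (rule strict_mono_Suc_iff[THEN iffD2], intro allI)
    fix j
    have "Suc (g j) < Suc (g (Suc j))" unfolding Sg using Kpos by simp
    then show "g j < g (Suc j)" by simp
  qed
  have zero: "of_nat K * st n = 0" if "n \<notin> range g" for n
  proof -
    have "\<not> K dvd Suc n"
    proof
      assume "K dvd Suc n"
      then obtain q where q: "Suc n = K * q" by (auto elim: dvdE)
      then obtain j where "q = Suc j" by (cases q) auto
      then have "n = g j" using q Sg[of j] by simp
      then show False using that by auto
    qed
    then have "coeff_c (Suc N) k (Suc n) = 0" unfolding coeff_c_def K_def by simp
    then show ?thesis unfolding st_def by simp
  qed
  have T1: "(\<lambda>j. of_nat K * st (g j)) sums (of_nat K * S)"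
    using sums_mono_reindex[OF gsm, of "\<lambda>m. of_nat K * st m"] zero KS by blast
  have teq: "of_nat K * st (g j) = tt j" for j
  proof -
    have kd: "k i dvd K" if "i < Suc N" for i
      using that unfolding K_def lcmk_def by (simp add: dvd_Lcm)
    have cc: "coeff_c (Suc N) k (K * Suc j) = fact (K * Suc j) / (\<Prod>i<Suc N. fact ((K div k i) * Suc j))"
    proof -
      have "(\<Prod>i<Suc N. fact (K * Suc j div k i) :: real) = (\<Prod>i<Suc N. fact ((K div k i) * Suc j))"
        by (rule prod.cong) (auto simp: dvd_div_mult kd)
      then show ?thesis unfolding coeff_c_def K_def[symmetric] by simp
    qed
    have "of_nat K * st (g j) = of_nat K * (complex_of_real (fact (K * Suc j) / (\<Prod>i<Suc N. fact ((K div k i) * Suc j)))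
        * \<xi> ^ (K * Suc j) / (of_nat (K * Suc j) * of_nat K ^ (K * Suc j)))"
      unfolding st_def Sg cc ..
    also have "\<dots> = tt j"
      unfolding tt_def z_def using Kpos by (intro alg_K) auto
    finally show ?thesis .
  qed
  have Tser: "tt sums (of_nat K * S)" using T1 teq by simp
  have MtK: "Mt ^ K / of_nat K ^ K = z * exp (of_nat K * S)"
    unfolding Mt z_def by (simp add: exp_of_nat_mult power_mult_distrib)
  show ?thesis
    using Sser Mt Tser MtK unfolding st_def tt_def by blast
qed

theorem mainTheorem3:
  fixes n :: nat and k :: "nat \<Rightarrow> nat" and eps :: "nat \<Rightarrow> real"
    and \<psi> \<xi> L :: complex
  assumes n2: "n \<ge> 2"
    and kpos: "\<forall>i<n. k i > 0"
    and ksum: "(\<Sum>i<n. 1 / real (k i)) = 1"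
    and epspos: "\<forall>j<n-1. eps j > 0"
    and psi_nz: "\<psi> \<noteq> 0"
    and xi_def: "\<xi> = inverse \<psi>"
    and L_log: "exp L = \<psi>"
    and small: "cmod \<xi> * (SUP x\<in>torus (n-1) eps.
                   cmod (fermatP n k x / (of_nat (lcmk n k) * (\<Prod>j<n-1. x j)))) < 1"
  shows "let K = lcmk n k;
             Mt = exp (- (1 / (2 * complex_of_real pi * \<i>) ^ (n-1)) *
                    torus_contour_integral (n-1) eps
                      (\<lambda>x. (L + Ln (1 - \<xi> * fermatP n k x / (of_nat K * (\<Prod>j<n-1. x j))))
                           / (\<Prod>j<n-1. x j)));
             z = \<xi> ^ K / of_nat K ^ K
         in (\<exists>S. (\<lambda>m. complex_of_real (coeff_c n k (Suc m)) * \<xi> ^ Suc m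
                        / (of_nat (Suc m) * of_nat K ^ Suc m)) sums S
                 \<and> Mt = \<xi> * exp S)
          \<and> (\<exists>T. (\<lambda>m. complex_of_real (fact (K * Suc m) / (\<Prod>i<n. fact ((K div k i) * Suc m)))
                        * z ^ Suc m / of_nat (Suc m)) sums T
                 \<and> Mt ^ K / of_nat K ^ K = z * exp T)"
proof -
  obtain N where nN: "n = Suc N" using n2 by (cases n) auto
  have kpos': "\<forall>i<Suc N. k i > 0" using kpos nN by simp
  have ksum': "(\<Sum>i<Suc N. 1 / real (k i)) = 1" using ksum nN by simp
  have eps': "\<forall>j<N. eps j > 0" using epspos nN by simp
  have small': "cmod \<xi> * (SUP x\<in>torus N eps. cmod (fermatP (Suc N) k x / (of_nat (lcmk (Suc N) k) * (\<Prod>j<N. x j)))) < 1"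
    using small unfolding nN diff_Suc_1 .
  show ?thesis unfolding Let_def nN diff_Suc_1
    by (rule main_aux[OF kpos' ksum' eps' psi_nz xi_def L_log small' refl refl refl])
qed

end
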